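(* Let $R \subseteq S$ be an extension of commutative rings, and let $R^*$ be the strict closure of $R$ in $S$. Then $R^* \subseteq R + MS$ (inside $S$) for every maximal ideal $M$ of $R$.
   Context: For an extension of commutative rings $R \subseteq S$, the strict closure of $R$ in $S$ is $R^* = \{\alpha \in S \mid \alpha\otimes 1 = 1\otimes \alpha \text{ in } S\otimes_R S\}$; it is a subring of $S$ containing $R$. *)

theory Defs
  imports Main
begin

text \<open>The ambient ring S is a type of class comm_ring_1; the subring R is a subset.\<close>

definition is_subring :: "'a::comm_ring_1 set \<Rightarrow> bool" where
  "is_subring R \<longleftrightarrow> 0 \<in> R \<and> 1 \<in> R \<and> (\<forall>x\<in>R. \<forall>y\<in>R. x + y \<in> R \<and> x * y \<in> R) \<and> (\<forall>x\<in>R. - x \<in> R)"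

definition is_ideal_of :: "'a::comm_ring_1 set \<Rightarrow> 'a set \<Rightarrow> bool" where
  "is_ideal_of R M \<longleftrightarrow> M \<subseteq> R \<and> 0 \<in> M \<and> (\<forall>x\<in>M. \<forall>y\<in>M. x + y \<in> M)
     \<and> (\<forall>x\<in>M. - x \<in> M) \<and> (\<forall>r\<in>R. \<forall>x\<in>M. r * x \<in> M)"

definition is_maximal_ideal_of :: "'a::comm_ring_1 set \<Rightarrow> 'a set \<Rightarrow> bool" where
  "is_maximal_ideal_of R M \<longleftrightarrow> is_ideal_of R M \<and> M \<noteq> R \<and>
     (\<forall>J. is_ideal_of R J \<and> M \<subseteq> J \<longrightarrow> J = M \<or> J = R)"

definition ext_ideal :: "'a::comm_ring_1 set \<Rightarrow> 'a set" where
  "ext_ideal M = {x. \<exists>(n::nat) m (s::nat \<Rightarrow> 'a). (\<forall>i<n. m i \<in> M) \<and> x = (\<Sum>i<n. m i * s i)}"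

text \<open>Tensor product S \<otimes>_R S, built as the free abelian group on S \<times> S
  (finitely supported integer-valued functions) modulo the subgroup generated by the
  biadditivity and R-balancedness relations. gen p is the basis element of p.\<close>
definition gen :: "'a \<times> 'a \<Rightarrow> ('a \<times> 'a \<Rightarrow> int)" where
  "gen p = (\<lambda>q. if q = p then 1 else 0)"

inductive_set tensor_rel :: "'a::comm_ring_1 set \<Rightarrow> ('a \<times> 'a \<Rightarrow> int) set" for R where
  zero: "(\<lambda>_. 0) \<in> tensor_rel R"
| addl: "(\<lambda>q. gen (s + s', t) q - gen (s, t) q - gen (s', t) q) \<in> tensor_rel R"
| addr: "(\<lambda>q. gen (s, t + t') q - gen (s, t) q - gen (s, t') q) \<in> tensor_rel R"
| bal: "r \<in> R \<Longrightarrow> (\<lambda>q. gen (r * s, t) q - gen (s, r * t) q) \<in> tensor_rel R"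
| add: "x \<in> tensor_rel R \<Longrightarrow> y \<in> tensor_rel R \<Longrightarrow> (\<lambda>q. x q + y q) \<in> tensor_rel R"
| neg: "x \<in> tensor_rel R \<Longrightarrow> (\<lambda>q. - x q) \<in> tensor_rel R"

definition tensor_eq :: "'a::comm_ring_1 set \<Rightarrow> 'a \<times> 'a \<Rightarrow> 'a \<times> 'a \<Rightarrow> bool" where
  "tensor_eq R p p' \<longleftrightarrow> (\<lambda>q. gen p q - gen p' q) \<in> tensor_rel R"

definition strict_closure :: "'a::comm_ring_1 set \<Rightarrow> 'a set" where
  "strict_closure R = {\<alpha>. tensor_eq R (\<alpha>, 1) (1, \<alpha>)}"

end

theory Submission
  imports Defs
begin

lemma sum_split_add: "(\<Sum>i<a+(b::nat). f i) = (\<Sum>i<a. f i) + (\<Sum>i<b. f (a+i)::'b::comm_monoid_add)"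
  by (induction b) (auto simp: add.assoc)

lemma ext_add:
  assumes "x \<in> ext_ideal M" "y \<in> ext_ideal M" shows "x + y \<in> ext_ideal M"
proof -
  obtain n1 :: nat and m1 s1 where 1: "\<forall>i<n1. m1 i \<in> M" "x = (\<Sum>i<n1. m1 i * s1 i)"
    using assms(1) unfolding ext_ideal_def by blast
  obtain n2 :: nat and m2 s2 where 2: "\<forall>i<n2. m2 i \<in> M" "y = (\<Sum>i<n2. m2 i * s2 i)"
    using assms(2) unfolding ext_ideal_def by blast
  define m where "m i = (if i < n1 then m1 i else m2 (i - n1))" for i
  define s where "s i = (if i < n1 then s1 i else s2 (i - n1))" for i
  have "\<forall>i<n1+n2. m i \<in> M" using 1 2 by (auto simp: m_def)
  moreover have "x + y = (\<Sum>i<n1+n2. m i * s i)"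
  proof -
    have a: "(\<Sum>i<n1. m i * s i) = (\<Sum>i<n1. m1 i * s1 i)"
      by (rule sum.cong) (auto simp: m_def s_def)
    have b: "(\<Sum>i<n2. m (n1+i) * s (n1+i)) = (\<Sum>i<n2. m2 i * s2 i)"
      by (rule sum.cong) (auto simp: m_def s_def)
    show ?thesis unfolding sum_split_add[where a=n1 and b=n2] a b using 1(2) 2(2) by simp
  qed
  ultimately show ?thesis unfolding ext_ideal_def
    by (intro CollectI exI[of _ "n1+n2"] exI[of _ m] exI[of _ s]) simp
qed

lemma ext_mult:
  assumes "x \<in> ext_ideal M" shows "x * t \<in> ext_ideal M"
proof -
  obtain n1 :: nat and m1 s1 where 1: "\<forall>i<n1. m1 i \<in> M" "x = (\<Sum>i<n1. m1 i * s1 i)"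
    using assms(1) unfolding ext_ideal_def by blast
  have "x * t = (\<Sum>i<n1. m1 i * (s1 i * t))" unfolding 1 sum_distrib_right by (simp add: mult.assoc)
  then show ?thesis using 1 unfolding ext_ideal_def
    by (intro CollectI exI[of _ n1] exI[of _ m1] exI[of _ "\<lambda>i. s1 i * t"]) simp
qed

lemma ext_neg:
  assumes "x \<in> ext_ideal M" shows "- x \<in> ext_ideal M"
  using ext_mult[OF assms, of "-1"] by simp

lemma ext_single:
  assumes "m \<in> M" shows "m * t \<in> ext_ideal M"
proof -
  have "m * t = (\<Sum>i<(1::nat). (\<lambda>_. m) i * (\<lambda>_. t) i)" by simp
  moreover have "\<forall>i<(1::nat). (\<lambda>_. m) i \<in> M" using assms by simp
  ultimately show ?thesis unfolding ext_ideal_def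
    by (intro CollectI exI[of _ "1::nat"] exI[of _ "\<lambda>_. m"] exI[of _ "\<lambda>_. t"]) simp
qed

lemma ext_M: "m \<in> M \<Longrightarrow> m \<in> ext_ideal M"
  using ext_single[of m M 1] by simp

lemma sum_gen:
  assumes "finite A" "p \<in> A"
  shows "(\<Sum>q\<in>A. of_int (gen p q) * g q) = (g p :: 'b::comm_ring_1)"
proof -
  have "(\<Sum>q\<in>A. of_int (gen p q) * g q) = (\<Sum>q\<in>A. if p = q then g q else 0)"
    by (rule sum.cong) (auto simp: gen_def)
  also have "\<dots> = g p" using assms by simp
  finally show ?thesis .
qed

lemma sum_supp:
  assumes "finite A" "{q. x q \<noteq> 0} \<subseteq> A"
  shows "(\<Sum>q\<in>{q. x q \<noteq> 0}. of_int (x q) * g q) = (\<Sum>q\<in>A. of_int (x q) * (g q :: 'b::comm_ring_1))"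
  using assms by (intro sum.mono_neutral_left) auto

theorem proposition2p2:
  fixes R M :: "'a::comm_ring_1 set"
  assumes "is_subring R"
    and "is_maximal_ideal_of R M"
  shows "strict_closure R \<subseteq> {r + x | r x. r \<in> R \<and> x \<in> ext_ideal M}"
proof
  fix \<alpha> assume a: "\<alpha> \<in> strict_closure R"
  define I where "I = ext_ideal M"
  have R0: "0 \<in> R" and R1: "1 \<in> R" and Radd: "\<And>x y. x\<in>R \<Longrightarrow> y\<in>R \<Longrightarrow> x + y \<in> R"
    and Rmul: "\<And>x y. x\<in>R \<Longrightarrow> y\<in>R \<Longrightarrow> x * y \<in> R" and Rneg: "\<And>x. x\<in>R \<Longrightarrow> -x \<in> R"
    using assms(1) unfolding is_subring_def by auto
  have Rsub: "\<And>x y. x\<in>R \<Longrightarrow> y\<in>R \<Longrightarrow> x - y \<in> R"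
    using Radd Rneg by (metis diff_conv_add_uminus)
  have MR: "M \<subseteq> R" using assms(2) unfolding is_maximal_ideal_of_def is_ideal_of_def by auto
  have maxl: "\<exists>u\<in>R. \<exists>m\<in>M. 1 = m + u * r" if r: "r \<in> R" "r \<notin> M" for r
  proof -
    define J where "J = {m + u * r | m u. m \<in> M \<and> u \<in> R}"
    have idM: "is_ideal_of R M" using assms(2) unfolding is_maximal_ideal_of_def by auto
    hence M0: "0 \<in> M" and Madd: "\<And>x y. x\<in>M \<Longrightarrow> y\<in>M \<Longrightarrow> x+y\<in>M" and Mneg: "\<And>x. x\<in>M \<Longrightarrow> -x\<in>M"
      and Mmul: "\<And>a x. a\<in>R \<Longrightarrow> x\<in>M \<Longrightarrow> a*x\<in>M"
      unfolding is_ideal_of_def by auto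
    have "is_ideal_of R J"
      unfolding is_ideal_of_def
    proof (intro conjI ballI)
      show "J \<subseteq> R" unfolding J_def using MR r Radd Rmul by auto
      show "0 \<in> J" unfolding J_def using M0 R0 by force
      fix x assume "x \<in> J"
      then obtain m u where x: "x = m + u * r" "m \<in> M" "u \<in> R" unfolding J_def by auto
      show "- x \<in> J" unfolding J_def using x Mneg Rneg
        by (intro CollectI exI[of _ "-m"] exI[of _ "-u"]) auto
      { fix y assume "y \<in> J"
        then obtain m' u' where y: "y = m' + u' * r" "m' \<in> M" "u' \<in> R" unfolding J_def by auto
        show "x + y \<in> J" unfolding J_def using x y Madd Radd
          by (intro CollectI exI[of _ "m+m'"] exI[of _ "u+u'"]) (auto simp: algebra_simps) }
      { fix a assume "a \<in> R"
        then show "a * x \<in> J" unfolding J_def using x Mmul Rmul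
          by (intro CollectI exI[of _ "a*m"] exI[of _ "a*u"]) (auto simp: algebra_simps) }
    qed
    moreover have "M \<subseteq> J" unfolding J_def using R0 by force
    moreover have "r \<in> J" unfolding J_def using M0 R1 by force
    ultimately have "J = R" using assms(2) r unfolding is_maximal_ideal_of_def by blast
    then have "1 \<in> J" using R1 by simp
    then show ?thesis unfolding J_def by auto
  qed
  show "\<alpha> \<in> {r + x | r x. r \<in> R \<and> x \<in> ext_ideal M}"
  proof (cases "1 \<in> I")
    case True
    then have "\<alpha> \<in> I" using ext_mult[of 1 M \<alpha>] unfolding I_def by simp
    then show ?thesis using R0 unfolding I_def by force
  next
    case False
    define A where "A = {N. I \<subseteq> N \<and> (\<forall>x\<in>N. \<forall>y\<in>N. x+y\<in>N) \<and> (\<forall>x\<in>N. -x\<in>N)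
        \<and> (\<forall>r\<in>R. \<forall>x\<in>N. r*x\<in>N) \<and> 1 \<notin> N}"
    have IA: "I \<in> A"
    proof -
      have "r * x \<in> I" if "x \<in> I" for r x
        using ext_mult[of x M r] that unfolding I_def by (simp add: mult.commute)
      then show ?thesis unfolding A_def using False ext_add ext_neg unfolding I_def by blast
    qed
    have "\<exists>N\<in>A. \<forall>X\<in>A. N \<subseteq> X \<longrightarrow> X = N"
    proof (rule Zorn_Lemma2, intro ballI)
      fix C assume C: "C \<in> chains A"
      show "\<exists>U\<in>A. \<forall>X\<in>C. X \<subseteq> U"
      proof (cases "C = {}")
        case True then show ?thesis using IA by auto
      next
        case False
        have CA: "C \<subseteq> A" and ch: "\<forall>X\<in>C. \<forall>Y\<in>C. X \<subseteq> Y \<or> Y \<subseteq> X"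
          using C unfolding chains_def chain_subset_def by auto
        have "\<Union>C \<in> A" unfolding A_def
        proof (intro CollectI conjI ballI)
          show "I \<subseteq> \<Union>C" using False CA unfolding A_def by blast
          show "1 \<notin> \<Union>C" using CA unfolding A_def by auto
          fix x assume "x \<in> \<Union>C"
          then obtain X where X: "X \<in> C" "x \<in> X" by auto
          show "-x \<in> \<Union>C" using X CA unfolding A_def by blast
          { fix r assume "r \<in> R" then show "r*x \<in> \<Union>C" using X CA unfolding A_def by blast }
          { fix y assume "y \<in> \<Union>C"
            then obtain Y where Y: "Y \<in> C" "y \<in> Y" by auto
            from ch X(1) Y(1) have "X \<subseteq> Y \<or> Y \<subseteq> X" by auto
            then show "x + y \<in> \<Union>C"
            proof
              assume "X \<subseteq> Y" then show ?thesis using X Y CA unfolding A_def by blast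
            next
              assume "Y \<subseteq> X" then show ?thesis using X Y CA unfolding A_def by blast
            qed }
        qed
        then show ?thesis by auto
      qed
    qed
    then obtain N where NA: "N \<in> A" and Nmax: "\<forall>X\<in>A. N \<subseteq> X \<longrightarrow> X = N" by blast
    have IN: "I \<subseteq> N" and Nadd: "\<And>x y. x\<in>N \<Longrightarrow> y\<in>N \<Longrightarrow> x+y\<in>N" and Nneg: "\<And>x. x\<in>N \<Longrightarrow> -x\<in>N"
      and Nmul: "\<And>r x. r\<in>R \<Longrightarrow> x\<in>N \<Longrightarrow> r*x\<in>N" and N1: "1 \<notin> N"
      using NA unfolding A_def by auto
    have N0: "0 \<in> N" using IN ext_M[of 0 M] MR assms(2) unfolding I_def is_maximal_ideal_of_def is_ideal_of_def
      by auto
    have Nsub: "\<And>x y. x\<in>N \<Longrightarrow> y\<in>N \<Longrightarrow> x-y\<in>N" using Nadd Nneg by (metis diff_conv_add_uminus)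
    have MN: "m \<in> N" if "m \<in> M" for m using IN ext_M[OF that] unfolding I_def by auto
    have RN: "r \<in> M" if rR: "r \<in> R" and rN: "r \<in> N" for r
    proof (rule ccontr)
      assume "r \<notin> M"
      then obtain u m where "u \<in> R" "m \<in> M" "1 = m + u * r" using maxl rR by blast
      then have "1 \<in> N" using Nadd MN Nmul rN by metis
      with N1 show False by simp
    qed
    have cex: "\<exists>c\<in>R. s - c \<in> N" for s
    proof (cases "s \<in> N")
      case True then show ?thesis using R0 by force
    next
      case sN: False
      define N' where "N' = {n + r * s | n r. n \<in> N \<and> r \<in> R}"
      have "N \<subseteq> N'" unfolding N'_def using R0 by force
      moreover have "s \<in> N'" unfolding N'_def using N0 R1 by force
      ultimately have "N' \<notin> A" using Nmax sN by blast
      moreover have "I \<subseteq> N'" using IN \<open>N \<subseteq> N'\<close> by auto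
      moreover have "\<forall>x\<in>N'. \<forall>y\<in>N'. x+y\<in>N'"
      proof (intro ballI)
        fix x y assume "x \<in> N'" "y \<in> N'"
        then obtain n r n' r' where "x = n + r*s" "y = n' + r'*s" "n\<in>N" "n'\<in>N" "r\<in>R" "r'\<in>R"
          unfolding N'_def by auto
        then show "x + y \<in> N'" unfolding N'_def using Nadd Radd
          by (intro CollectI exI[of _ "n+n'"] exI[of _ "r+r'"]) (auto simp: algebra_simps)
      qed
      moreover have "\<forall>x\<in>N'. -x\<in>N'"
      proof (intro ballI)
        fix x assume "x \<in> N'"
        then obtain n r where "x = n + r*s" "n\<in>N" "r\<in>R" unfolding N'_def by auto
        then show "-x \<in> N'" unfolding N'_def using Nneg Rneg
          by (intro CollectI exI[of _ "-n"] exI[of _ "-r"]) (auto simp: algebra_simps)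
      qed
      moreover have "\<forall>a\<in>R. \<forall>x\<in>N'. a*x\<in>N'"
      proof (intro ballI)
        fix a x assume "a \<in> R" "x \<in> N'"
        then obtain n r where "x = n + r*s" "n\<in>N" "r\<in>R" unfolding N'_def by auto
        then show "a*x \<in> N'" unfolding N'_def using Nmul Rmul \<open>a \<in> R\<close>
          by (intro CollectI exI[of _ "a*n"] exI[of _ "a*r"]) (auto simp: algebra_simps)
      qed
      ultimately have "1 \<in> N'" unfolding A_def by blast
      then obtain n r where nr: "1 = n + r * s" "n \<in> N" "r \<in> R" unfolding N'_def by auto
      show ?thesis
      proof (cases "r \<in> M")
        case True
        then have "r * s \<in> N" using ext_single[OF True, of s] IN unfolding I_def by auto
        then have "1 \<in> N" using nr Nadd by metis
        with N1 show ?thesis by simp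
      next
        case False
        then obtain u m where um: "u \<in> R" "m \<in> M" "1 = m + u * r" using maxl nr(3) by blast
        have "s - u = m * s + (- (u * n))"
        proof -
          have "s = (m + u*r) * s" using um(3) by simp
          also have "\<dots> = m*s + u*(r*s)" by (simp add: algebra_simps)
          also have "r*s = 1 - n" using nr(1) by (simp add: algebra_simps)
          finally show ?thesis by (simp add: algebra_simps)
        qed
        moreover have "m * s \<in> N" using ext_single[OF um(2), of s] IN unfolding I_def by auto
        moreover have "- (u * n) \<in> N" using Nneg Nmul um(1) nr(2) by auto
        ultimately have "s - u \<in> N" using Nadd by metis
        then show ?thesis using um(1) by blast
      qed
    qed
    define c where "c s = (SOME c. c \<in> R \<and> s - c \<in> N)" for s
    have cR: "c s \<in> R" and cN: "s - c s \<in> N" for s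
      using someI_ex[OF cex[of s, unfolded Bex_def]] unfolding c_def by auto
    define g where "g = (\<lambda>(s::'a, t::'a). c s * t)"
    define F where "F x = (\<Sum>q\<in>{q. x q \<noteq> 0}. of_int (x q) * g q)" for x :: "'a \<times> 'a \<Rightarrow> int"
    have dI: "d * t \<in> I" if "d \<in> R" "d \<in> N" for d t
      using ext_single[OF RN[OF that]] unfolding I_def by auto
    have Iadd: "x + y \<in> I" if "x \<in> I" "y \<in> I" for x y using that ext_add unfolding I_def by auto
    have Ineg: "- x \<in> I" if "x \<in> I" for x using that ext_neg unfolding I_def by auto
    have Fg: "F x = (\<Sum>q\<in>B. of_int (x q) * g q)" if "finite B" "{q. x q \<noteq> 0} \<subseteq> B" for x B
      unfolding F_def using sum_supp[OF that] .
    have gen3: "(\<Sum>q\<in>B. of_int (gen p q - gen p' q - gen p'' q) * g q) = g p - g p' - g p''"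
      if "finite B" "p \<in> B" "p' \<in> B" "p'' \<in> B" for B p p' p''
      using sum_gen[OF that(1,2), of g] sum_gen[OF that(1,3), of g] sum_gen[OF that(1,4), of g]
      by (simp only: of_int_diff left_diff_distrib sum_subtractf)
    have gen2: "(\<Sum>q\<in>B. of_int (gen p q - gen p' q) * g q) = g p - g p'"
      if "finite B" "p \<in> B" "p' \<in> B" for B p p'
      using sum_gen[OF that(1,2), of g] sum_gen[OF that(1,3), of g]
      by (simp only: of_int_diff left_diff_distrib sum_subtractf)
    have suppg: "{q. gen p q \<noteq> 0} \<subseteq> {p}" for p by (auto simp: gen_def)
    have key: "finite {q. x q \<noteq> 0} \<and> F x \<in> I" if "x \<in> tensor_rel R" for x
      using that
    proof induction
      case zero
      then show ?case using ext_M[of 0 M] MR assms(2) unfolding F_def I_def is_maximal_ideal_of_def is_ideal_of_def by auto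
    next
      case (addl s s' t)
      let ?B = "{(s+s',t), (s,t), (s',t)}"
      have sub: "{q. gen (s + s', t) q - gen (s, t) q - gen (s', t) q \<noteq> 0} \<subseteq> ?B"
        by (auto simp: gen_def)
      have "F (\<lambda>q. gen (s + s', t) q - gen (s, t) q - gen (s', t) q) = g (s+s',t) - g (s,t) - g (s',t)"
        using Fg[OF _ sub] gen3[of ?B] by simp
      also have "\<dots> = (c (s+s') - c s - c s') * t" unfolding g_def by (simp add: algebra_simps)
      also have "\<dots> \<in> I"
      proof (rule dI)
        show "c (s+s') - c s - c s' \<in> R" using cR Rsub by metis
        have "(s - c s) + (s' - c s') - (s + s' - c (s+s')) \<in> N" using cN Nadd Nsub by metis
        then show "c (s+s') - c s - c s' \<in> N" by (simp add: algebra_simps)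
      qed
      finally show ?case using finite_subset[OF sub] by simp
    next
      case (addr s t t')
      let ?B = "{(s,t+t'), (s,t), (s,t')}"
      have sub: "{q. gen (s, t + t') q - gen (s, t) q - gen (s, t') q \<noteq> 0} \<subseteq> ?B"
        by (auto simp: gen_def)
      have "F (\<lambda>q. gen (s, t + t') q - gen (s, t) q - gen (s, t') q) = g (s,t+t') - g (s,t) - g (s,t')"
        using Fg[OF _ sub] gen3[of ?B] by simp
      also have "\<dots> = 0" unfolding g_def by (simp add: algebra_simps)
      finally show ?case using finite_subset[OF sub] ext_M[of 0 M] MR assms(2)
        unfolding I_def is_maximal_ideal_of_def is_ideal_of_def by auto
    next
      case (bal r s t)
      let ?B = "{(r*s,t), (s,r*t)}"
      have sub: "{q. gen (r * s, t) q - gen (s, r * t) q \<noteq> 0} \<subseteq> ?B"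
        by (auto simp: gen_def)
      have "F (\<lambda>q. gen (r * s, t) q - gen (s, r * t) q) = g (r*s,t) - g (s,r*t)"
        using Fg[OF _ sub] gen2[of ?B] by simp
      also have "\<dots> = (c (r*s) - r * c s) * t" unfolding g_def by (simp add: algebra_simps)
      also have "\<dots> \<in> I"
      proof (rule dI)
        show "c (r*s) - r * c s \<in> R" using cR Rsub Rmul bal by metis
        have "r * (s - c s) - (r*s - c (r*s)) \<in> N" using cN Nmul Nsub bal by metis
        then show "c (r*s) - r * c s \<in> N" by (simp add: algebra_simps)
      qed
      finally show ?case using finite_subset[OF sub] by simp
    next
      case (add x y)
      let ?B = "{q. x q \<noteq> 0} \<union> {q. y q \<noteq> 0}"
      have fin: "finite ?B" using add by auto
      have sub: "{q. x q + y q \<noteq> 0} \<subseteq> ?B" by auto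
      have "F (\<lambda>q. x q + y q) = (\<Sum>q\<in>?B. of_int (x q + y q) * g q)" using Fg[OF fin sub] .
      also have "\<dots> = (\<Sum>q\<in>?B. of_int (x q) * g q) + (\<Sum>q\<in>?B. of_int (y q) * g q)"
        by (simp add: algebra_simps sum.distrib)
      also have "\<dots> = F x + F y" using Fg[OF fin, of x] Fg[OF fin, of y] by auto
      finally show ?case using Iadd add finite_subset[OF sub fin] by simp
    next
      case (neg x)
      have "F (\<lambda>q. - x q) = - F x" unfolding F_def by (simp add: sum_negf)
      then show ?case using Ineg neg by simp
    qed
    have "(\<lambda>q. gen (\<alpha>, 1) q - gen (1, \<alpha>) q) \<in> tensor_rel R"
      using a unfolding strict_closure_def tensor_eq_def by auto
    from key[OF this] have "F (\<lambda>q. gen (\<alpha>, 1) q - gen (1, \<alpha>) q) \<in> I" by simp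
    moreover have sub: "{q. gen (\<alpha>, 1) q - gen (1, \<alpha>) q \<noteq> 0} \<subseteq> {(\<alpha>,1),(1,\<alpha>)}" by (auto simp: gen_def)
    moreover have "F (\<lambda>q. gen (\<alpha>, 1) q - gen (1, \<alpha>) q) = g (\<alpha>,1) - g (1,\<alpha>)"
      using Fg[OF _ sub] gen2[of "{(\<alpha>,1),(1,\<alpha>)}" "(\<alpha>,1)" "(1,\<alpha>)"] by simp
    ultimately have "g (\<alpha>,1) - g (1,\<alpha>) \<in> I" by simp
    then have h1: "c \<alpha> - c 1 * \<alpha> \<in> I" unfolding g_def by simp
    have "(c 1 - 1) * \<alpha> \<in> I"
    proof (rule dI)
      show "c 1 - 1 \<in> R" using cR R1 Rsub by metis
      show "c 1 - 1 \<in> N" using Nneg[OF cN[of 1]] by simp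
    qed
    with h1 have "c \<alpha> - c 1 * \<alpha> + (c 1 - 1) * \<alpha> \<in> I" using Iadd by blast
    then have "c \<alpha> - \<alpha> \<in> I" by (simp add: algebra_simps)
    then have "- (c \<alpha> - \<alpha>) \<in> I" by (rule Ineg)
    then have "\<alpha> - c \<alpha> \<in> I" by simp
    moreover have "\<alpha> = c \<alpha> + (\<alpha> - c \<alpha>)" by simp
    ultimately show ?thesis using cR unfolding I_def by blast
  qed
qed

end
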